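(* Let $\mathbf{A}=(a_{ij})$ be a table with nonnegative entries, let $(R_1,\dots,R_k)$ be a proper partition of its row set and $(C_1,\dots,C_k)$ a proper partition of its column set, and set $s_{ab}=\sum_{i\in R_a}\sum_{j\in C_b}a_{ij}$ for $1\le a,b\le k$. Suppose the $k\times k$ matrix $(s_{ab})$ is an independent table, i.e. $s_{ab}=\big(\sum_{b'=1}^k s_{ab'}\big)\big(\sum_{a'=1}^k s_{a'b}\big)$ for all $a,b$. Then ${\mathrm{disc}}_\ell(\mathbf{A})\le{\mathrm{disc}}_1(\mathbf{A})$ for every $\ell=2,\dots,k$.
   Context: Standing assumptions: $\mathbf{A}$ is an $m\times n$ array of nonnegative entries whose total sum is $1$, and $\mathbf{A}$ is non-decomposable ($\mathbf{A}\mathbf{A}^T$ if $m\le n$, or $\mathbf{A}^T\mathbf{A}$ if $m>n$, is irreducible); in particular all row sums $d_{row,i}=\sum_j a_{ij}$ and column sums $d_{col,j}=\sum_i a_{ij}$ are positive. Let $R$ be the row set and $C$ the column set. For $X\subset R$, $Y\subset C$: ${\mathrm{Vol}}(X)=\sum_{i\in X}d_{row,i}$, ${\mathrm{Vol}}(Y)=\sum_{j\in Y}d_{col,j}$, $a(X,Y)=\sum_{i\in X}\sum_{j\in Y}a_{ij}$, and for nonempty $X,Y$, $\rho(X,Y)=\frac{a(X,Y)}{{\mathrm{Vol}}(X){\mathrm{Vol}}(Y)}$. For a proper $k$-partition $R_1,\dots,R_k$ of $R$ and $C_1,\dots,C_k$ of $C$ (all parts nonempty), and nonempty $X\subset R_a$,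 $Y\subset C_b$, ${\mathrm{disc}}(X,Y;R_a,C_b)=|\rho(X,Y)-\rho(R_a,C_b)|\sqrt{{\mathrm{Vol}}(X){\mathrm{Vol}}(Y)}$; ${\mathrm{disc}}(\mathbf{A};R_1,\dots,R_k,C_1,\dots,C_k)=\max_{1\le a,b\le k}\max_{X\subset R_a,\,Y\subset C_b}{\mathrm{disc}}(X,Y;R_a,C_b)$; and ${\mathrm{disc}}_k(\mathbf{A})$ is the minimum of this quantity over all proper $k$-partitions of the rows and of the columns. (For $k=1$ the partition is $R$, $C$ themselves.) *)

theory Defs
  imports Complex_Main
begin

text \<open>An m x n table is a function A :: nat => nat => real, rows indexed by
  {..<m}, columns by {..<n}.\<close>

definition row_vol :: "(nat \<Rightarrow> nat \<Rightarrow> real) \<Rightarrow> nat \<Rightarrow> nat set \<Rightarrow> real" where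
  "row_vol A n X = (\<Sum>i\<in>X. \<Sum>j<n. A i j)"

definition col_vol :: "(nat \<Rightarrow> nat \<Rightarrow> real) \<Rightarrow> nat \<Rightarrow> nat set \<Rightarrow> real" where
  "col_vol A m Y = (\<Sum>j\<in>Y. \<Sum>i<m. A i j)"

definition amass :: "(nat \<Rightarrow> nat \<Rightarrow> real) \<Rightarrow> nat set \<Rightarrow> nat set \<Rightarrow> real" where
  "amass A X Y = (\<Sum>i\<in>X. \<Sum>j\<in>Y. A i j)"

definition rho :: "(nat \<Rightarrow> nat \<Rightarrow> real) \<Rightarrow> nat \<Rightarrow> nat \<Rightarrow> nat set \<Rightarrow> nat set \<Rightarrow> real" where
  "rho A m n X Y = amass A X Y / (row_vol A n X * col_vol A m Y)"

definition disc_sets ::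
  "(nat \<Rightarrow> nat \<Rightarrow> real) \<Rightarrow> nat \<Rightarrow> nat \<Rightarrow> nat set \<Rightarrow> nat set \<Rightarrow> nat set \<Rightarrow> nat set \<Rightarrow> real" where
  "disc_sets A m n X Y Ra Cb =
     \<bar>rho A m n X Y - rho A m n Ra Cb\<bar> * sqrt (row_vol A n X * col_vol A m Y)"

definition proper_partition :: "nat \<Rightarrow> nat \<Rightarrow> (nat \<Rightarrow> nat set) \<Rightarrow> bool" where
  "proper_partition N k P \<longleftrightarrow>
     (\<forall>a<k. P a \<noteq> {}) \<and> (\<forall>a<k. \<forall>b<k. a \<noteq> b \<longrightarrow> P a \<inter> P b = {}) \<and>
     (\<Union>a<k. P a) = {..<N}"

definition disc_part ::
  "(nat \<Rightarrow> nat \<Rightarrow> real) \<Rightarrow> nat \<Rightarrow> nat \<Rightarrow> nat \<Rightarrow> (nat \<Rightarrow> nat set) \<Rightarrow> (nat \<Rightarrow> nat set) \<Rightarrow> real" where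
  "disc_part A m n k R C =
     Max {disc_sets A m n X Y (R a) (C b) | a b X Y.
            a < k \<and> b < k \<and> X \<subseteq> R a \<and> X \<noteq> {} \<and> Y \<subseteq> C b \<and> Y \<noteq> {}}"

definition disc_k :: "(nat \<Rightarrow> nat \<Rightarrow> real) \<Rightarrow> nat \<Rightarrow> nat \<Rightarrow> nat \<Rightarrow> real" where
  "disc_k A m n k =
     Inf {disc_part A m n k R C | R C. proper_partition m k R \<and> proper_partition n k C}"

definition irreducible_mat :: "nat \<Rightarrow> (nat \<Rightarrow> nat \<Rightarrow> real) \<Rightarrow> bool" where
  "irreducible_mat N M \<longleftrightarrow>
     (\<forall>i<N. \<forall>j<N. (i, j) \<in> {(p, q). p < N \<and> q < N \<and> M p q > 0}\<^sup>*)"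

definition non_decomposable :: "(nat \<Rightarrow> nat \<Rightarrow> real) \<Rightarrow> nat \<Rightarrow> nat \<Rightarrow> bool" where
  "non_decomposable A m n =
     (if m \<le> n then irreducible_mat m (\<lambda>i i'. \<Sum>j<n. A i j * A i' j)
      else irreducible_mat n (\<lambda>j j'. \<Sum>i<m. A i j * A i j'))"

end

theory Submission
  imports Defs
begin

lemma pp_sub: assumes "proper_partition N k P" "a < k" shows "P a \<subseteq> {..<N}"
proof -
  have "P a \<subseteq> (\<Union>a<k. P a)" using assms(2) by auto
  also have "\<dots> = {..<N}" using assms(1) unfolding proper_partition_def by simp
  finally show ?thesis .
qed

lemma fin_disc:
  fixes l :: nat
  assumes "\<forall>a<l. P a \<subseteq> {..<m}" "\<forall>b<l. Q b \<subseteq> {..<n}"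
  shows "finite {disc_sets A m n X Y (P a) (Q b) | a b X Y.
            a < l \<and> b < l \<and> X \<subseteq> P a \<and> X \<noteq> {} \<and> Y \<subseteq> Q b \<and> Y \<noteq> {}}"
proof -
  have "{disc_sets A m n X Y (P a) (Q b) | a b X Y.
            a < l \<and> b < l \<and> X \<subseteq> P a \<and> X \<noteq> {} \<and> Y \<subseteq> Q b \<and> Y \<noteq> {}}
     \<subseteq> (\<lambda>(a,b,X,Y). disc_sets A m n X Y (P a) (Q b)) ` ({..<l} \<times> {..<l} \<times> Pow {..<m} \<times> Pow {..<n})"
  proof
    fix x assume "x \<in> {disc_sets A m n X Y (P a) (Q b) | a b X Y.
            a < l \<and> b < l \<and> X \<subseteq> P a \<and> X \<noteq> {} \<and> Y \<subseteq> Q b \<and> Y \<noteq> {}}"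
    then obtain a b X Y where h: "x = disc_sets A m n X Y (P a) (Q b)" "a < l" "b < l"
      "X \<subseteq> P a" "Y \<subseteq> Q b" by blast
    have "X \<subseteq> {..<m}" using h(2,4) assms(1) by blast
    moreover have "Y \<subseteq> {..<n}" using h(3,5) assms(2) by blast
    ultimately show "x \<in> (\<lambda>(a,b,X,Y). disc_sets A m n X Y (P a) (Q b)) ` ({..<l} \<times> {..<l} \<times> Pow {..<m} \<times> Pow {..<n})"
      using h by (intro image_eqI[where x="(a,b,X,Y)"]) auto
  qed
  moreover have "finite ({..<l} \<times> {..<l} \<times> Pow {..<m} \<times> Pow {..<n})" by (intro finite_cartesian_product) auto
  ultimately show ?thesis by (rule finite_subset[OF _ finite_imageI])
qed

lemma row_vol_nonneg:
  assumes "\<And>i j. i < m \<Longrightarrow> j < n \<Longrightarrow> A i j \<ge> 0" "X \<subseteq> {..<m}"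
  shows "0 \<le> row_vol A n X"
  unfolding row_vol_def using assms by (auto intro!: sum_nonneg)

lemma col_vol_nonneg:
  assumes "\<And>i j. i < m \<Longrightarrow> j < n \<Longrightarrow> A i j \<ge> 0" "Y \<subseteq> {..<n}"
  shows "0 \<le> col_vol A m Y"
  unfolding col_vol_def using assms by (auto intro!: sum_nonneg)

lemma disc_part_nonneg:
  assumes nonneg: "\<And>i j. i < m \<Longrightarrow> j < n \<Longrightarrow> A i j \<ge> 0"
    and P: "proper_partition m l P" and Q: "proper_partition n l Q" and l: "0 < l"
  shows "0 \<le> disc_part A m n l P Q"
proof -
  let ?S = "{disc_sets A m n X Y (P a) (Q b) | a b X Y.
            a < l \<and> b < l \<and> X \<subseteq> P a \<and> X \<noteq> {} \<and> Y \<subseteq> Q b \<and> Y \<noteq> {}}"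
  have fin: "finite ?S" by (rule fin_disc) (use pp_sub[OF P] pp_sub[OF Q] in auto)
  have ne: "P 0 \<noteq> {}" "Q 0 \<noteq> {}" using P Q l unfolding proper_partition_def by auto
  have mem: "disc_sets A m n (P 0) (Q 0) (P 0) (Q 0) \<in> ?S"
    using ne l by blast
  have "0 \<le> disc_sets A m n (P 0) (Q 0) (P 0) (Q 0)"
    unfolding disc_sets_def
    using row_vol_nonneg[OF nonneg pp_sub[OF P l]] col_vol_nonneg[OF nonneg pp_sub[OF Q l]]
    by simp
  also have "\<dots> \<le> Max ?S" using Max_ge[OF fin mem] .
  finally show ?thesis unfolding disc_part_def .
qed

lemma amass_UN_right:
  assumes "finite J" "\<forall>b\<in>J. finite (C b)" "\<forall>b\<in>J. \<forall>b'\<in>J. b \<noteq> b' \<longrightarrow> C b \<inter> C b' = {}"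
  shows "amass A X (\<Union>b\<in>J. C b) = (\<Sum>b\<in>J. amass A X (C b))"
  unfolding amass_def sum.UNION_disjoint[OF assms] by (rule sum.swap)

lemma amass_UN_left:
  assumes "finite J" "\<forall>b\<in>J. finite (R b)" "\<forall>b\<in>J. \<forall>b'\<in>J. b \<noteq> b' \<longrightarrow> R b \<inter> R b' = {}"
  shows "amass A (\<Union>b\<in>J. R b) Y = (\<Sum>b\<in>J. amass A (R b) Y)"
  unfolding amass_def sum.UNION_disjoint[OF assms] ..

theorem mainTheorem4:
  fixes A :: "nat \<Rightarrow> nat \<Rightarrow> real" and m n k :: nat
    and R C :: "nat \<Rightarrow> nat set"
  assumes nonneg: "\<And>i j. i < m \<Longrightarrow> j < n \<Longrightarrow> A i j \<ge> 0"
    and total: "(\<Sum>i<m. \<Sum>j<n. A i j) = 1"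
    and nondec: "non_decomposable A m n"
    and rowpos: "\<And>i. i < m \<Longrightarrow> (\<Sum>j<n. A i j) > 0"
    and colpos: "\<And>j. j < n \<Longrightarrow> (\<Sum>i<m. A i j) > 0"
    and partR: "proper_partition m k R"
    and partC: "proper_partition n k C"
    and indep: "\<And>a b. a < k \<Longrightarrow> b < k \<Longrightarrow>
       amass A (R a) (C b) =
         (\<Sum>b'<k. amass A (R a) (C b')) * (\<Sum>a'<k. amass A (R a') (C b))"
  shows "\<forall>l. 2 \<le> l \<and> l \<le> k \<longrightarrow> disc_k A m n l \<le> disc_k A m n 1"
proof (intro allI impI)
  fix l assume l: "2 \<le> l \<and> l \<le> k"
  have m0: "m > 0" using total by (cases m) auto
  have n0: "n > 0" using total by (cases n) auto
  have Rsub: "\<And>a. a < k \<Longrightarrow> R a \<subseteq> {..<m}" using pp_sub[OF partR] .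
  have Csub: "\<And>a. a < k \<Longrightarrow> C a \<subseteq> {..<n}" using pp_sub[OF partC] .
  have Rfin: "\<And>a. a < k \<Longrightarrow> finite (R a)" using Rsub finite_subset by blast
  have Cfin: "\<And>a. a < k \<Longrightarrow> finite (C a)" using Csub finite_subset by blast
  have Rdisj: "\<And>a b. a < k \<Longrightarrow> b < k \<Longrightarrow> a \<noteq> b \<Longrightarrow> R a \<inter> R b = {}"
    using partR unfolding proper_partition_def by blast
  have Cdisj: "\<And>a b. a < k \<Longrightarrow> b < k \<Longrightarrow> a \<noteq> b \<Longrightarrow> C a \<inter> C b = {}"
    using partC unfolding proper_partition_def by blast
  have RU: "(\<Union>a<k. R a) = {..<m}" using partR unfolding proper_partition_def by blast
  have CU: "(\<Union>a<k. C a) = {..<n}" using partC unfolding proper_partition_def by blast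
  have rv: "\<And>X. row_vol A n X = amass A X {..<n}" by (simp add: row_vol_def amass_def)
  have cv: "\<And>Y. col_vol A m Y = amass A {..<m} Y"
    unfolding col_vol_def amass_def by (rule sum.swap)
  have UR: "\<And>I Y. I \<subseteq> {..<k} \<Longrightarrow> amass A (\<Union>a\<in>I. R a) Y = (\<Sum>a\<in>I. amass A (R a) Y)"
  proof -
    fix I Z assume I: "I \<subseteq> {..<k}"
    show "amass A (\<Union>a\<in>I. R a) Z = (\<Sum>a\<in>I. amass A (R a) Z)" proof (rule amass_UN_left)
      show "finite I" using finite_subset[OF I] by simp
      show "\<forall>b\<in>I. finite (R b)" using I Rfin by blast
      show "\<forall>b\<in>I. \<forall>b'\<in>I. b \<noteq> b' \<longrightarrow> R b \<inter> R b' = {}" using I Rdisj by blast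
    qed
  qed
  have UC: "\<And>I X. I \<subseteq> {..<k} \<Longrightarrow> amass A X (\<Union>a\<in>I. C a) = (\<Sum>a\<in>I. amass A X (C a))"
  proof -
    fix I Z assume I: "I \<subseteq> {..<k}"
    show "amass A Z (\<Union>a\<in>I. C a) = (\<Sum>a\<in>I. amass A Z (C a))" proof (rule amass_UN_right)
      show "finite I" using finite_subset[OF I] by simp
      show "\<forall>b\<in>I. finite (C b)" using I Cfin by blast
      show "\<forall>b\<in>I. \<forall>b'\<in>I. b \<noteq> b' \<longrightarrow> C b \<inter> C b' = {}" using I Cdisj by blast
    qed
  qed
  have base: "\<And>a b. a < k \<Longrightarrow> b < k \<Longrightarrow>
      amass A (R a) (C b) = row_vol A n (R a) * col_vol A m (C b)"
  proof -
    fix a b assume ab: "a < k" "b < k"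
    have "row_vol A n (R a) = (\<Sum>b'<k. amass A (R a) (C b'))"
      using rv UC[of "{..<k}" "R a"] CU by simp
    moreover have "col_vol A m (C b) = (\<Sum>a'<k. amass A (R a') (C b))"
      using cv UR[of "{..<k}" "C b"] RU by simp
    ultimately show "amass A (R a) (C b) = row_vol A n (R a) * col_vol A m (C b)"
      using indep[OF ab] by simp
  qed
  have gen: "\<And>I J. I \<subseteq> {..<k} \<Longrightarrow> J \<subseteq> {..<k} \<Longrightarrow>
     amass A (\<Union>a\<in>I. R a) (\<Union>b\<in>J. C b) = row_vol A n (\<Union>a\<in>I. R a) * col_vol A m (\<Union>b\<in>J. C b)"
  proof -
    fix I J assume I: "I \<subseteq> {..<k}" and J: "J \<subseteq> {..<k}"
    have "amass A (\<Union>a\<in>I. R a) (\<Union>b\<in>J. C b) = (\<Sum>a\<in>I. \<Sum>b\<in>J. amass A (R a) (C b))"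
      using UR[OF I] UC[OF J] by (simp add: sum.swap[where A=J])
    also have "\<dots> = (\<Sum>a\<in>I. \<Sum>b\<in>J. row_vol A n (R a) * col_vol A m (C b))"
      using I J base by (intro sum.cong) auto
    also have "\<dots> = (\<Sum>a\<in>I. row_vol A n (R a)) * (\<Sum>b\<in>J. col_vol A m (C b))"
      by (simp add: sum_product)
    also have "(\<Sum>a\<in>I. row_vol A n (R a)) = row_vol A n (\<Union>a\<in>I. R a)"
      using rv UR[OF I] by simp
    also have "(\<Sum>b\<in>J. col_vol A m (C b)) = col_vol A m (\<Union>b\<in>J. C b)"
      using cv UC[OF J] by simp
    finally show "amass A (\<Union>a\<in>I. R a) (\<Union>b\<in>J. C b) = row_vol A n (\<Union>a\<in>I. R a) * col_vol A m (\<Union>b\<in>J. C b)" .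
  qed
  define g where "g c = min c (l - 1)" for c :: nat
  define R' where "R' a = (\<Union>c\<in>{c. c < k \<and> g c = a}. R c)" for a
  define C' where "C' a = (\<Union>c\<in>{c. c < k \<and> g c = a}. C c)" for a
  have gl: "\<And>c. g c < l" using l unfolding g_def by auto
  have ga: "\<And>a. a < l \<Longrightarrow> a \<in> {c. c < k \<and> g c = a}" using l unfolding g_def by auto
  have ppR': "proper_partition m l R'"
    unfolding proper_partition_def
  proof (intro conjI allI impI)
    fix a assume "a < l"
    then show "R' a \<noteq> {}" using ga[of a] partR l unfolding R'_def proper_partition_def by force
  next
    fix a b assume "a < l" "b < l" "a \<noteq> b"
    show "R' a \<inter> R' b = {}"
      unfolding R'_def using Rdisj \<open>a \<noteq> b\<close> by fastforce
  next
    show "(\<Union>a<l. R' a) = {..<m}"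
      unfolding RU[symmetric] R'_def using gl by blast
  qed
  have ppC': "proper_partition n l C'"
    unfolding proper_partition_def
  proof (intro conjI allI impI)
    fix a assume "a < l"
    then show "C' a \<noteq> {}" using ga[of a] partC l unfolding C'_def proper_partition_def by force
  next
    fix a b assume "a < l" "b < l" "a \<noteq> b"
    show "C' a \<inter> C' b = {}"
      unfolding C'_def using Cdisj \<open>a \<noteq> b\<close> by fastforce
  next
    show "(\<Union>a<l. C' a) = {..<n}"
      unfolding CU[symmetric] C'_def using gl by blast
  qed
  have rvpos: "\<And>X. X \<subseteq> {..<m} \<Longrightarrow> X \<noteq> {} \<Longrightarrow> row_vol A n X > 0"
    unfolding row_vol_def by (rule sum_pos) (use rowpos finite_subset in auto)
  have cvpos: "\<And>Y. Y \<subseteq> {..<n} \<Longrightarrow> Y \<noteq> {} \<Longrightarrow> col_vol A m Y > 0"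
    unfolding col_vol_def by (rule sum_pos) (use colpos finite_subset in auto)
  have rho1: "\<And>a b. a < l \<Longrightarrow> b < l \<Longrightarrow> rho A m n (R' a) (C' b) = 1"
  proof -
    fix a b assume ab: "a < l" "b < l"
    have "amass A (R' a) (C' b) = row_vol A n (R' a) * col_vol A m (C' b)"
      unfolding R'_def C'_def by (rule gen) auto
    moreover have "row_vol A n (R' a) > 0"
      using rvpos pp_sub[OF ppR' ab(1)] ppR' ab(1) unfolding proper_partition_def by blast
    moreover have "col_vol A m (C' b) > 0"
      using cvpos pp_sub[OF ppC' ab(2)] ppC' ab(2) unfolding proper_partition_def by blast
    ultimately show "rho A m n (R' a) (C' b) = 1" unfolding rho_def by simp
  qed
  have amtot: "amass A {..<m} {..<n} = 1" using total by (simp add: amass_def)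
  have rho0: "rho A m n {..<m} {..<n} = 1"
    unfolding rho_def using amtot rv[of "{..<m}"] cv[of "{..<n}"] by simp
  define T where "T = {disc_sets A m n X Y {..<m} {..<n} | X Y.
        X \<subseteq> {..<m} \<and> X \<noteq> {} \<and> Y \<subseteq> {..<n} \<and> Y \<noteq> {}}"
  have finT: "finite T"
  proof -
    have "T \<subseteq> (\<lambda>(X,Y). disc_sets A m n X Y {..<m} {..<n}) ` (Pow {..<m} \<times> Pow {..<n})"
      unfolding T_def by auto
    then show ?thesis by (rule finite_subset) simp
  qed
  let ?S = "{disc_sets A m n X Y (R' a) (C' b) | a b X Y.
            a < l \<and> b < l \<and> X \<subseteq> R' a \<and> X \<noteq> {} \<and> Y \<subseteq> C' b \<and> Y \<noteq> {}}"
  have ST: "?S \<subseteq> T"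
  proof
    fix x assume "x \<in> ?S"
    then obtain a b X Y where x: "x = disc_sets A m n X Y (R' a) (C' b)" and
      h: "a < l" "b < l" "X \<subseteq> R' a" "X \<noteq> {}" "Y \<subseteq> C' b" "Y \<noteq> {}" by blast
    have "x = disc_sets A m n X Y {..<m} {..<n}"
      unfolding x disc_sets_def using rho1[OF h(1,2)] rho0 by simp
    then show "x \<in> T" unfolding T_def
      using h pp_sub[OF ppR' h(1)] pp_sub[OF ppC' h(2)] by blast
  qed
  have Sne: "?S \<noteq> {}"
  proof -
    have l0: "0 < l" using l by auto
    have "R' 0 \<noteq> {}" "C' 0 \<noteq> {}" using ppR' ppC' l0 unfolding proper_partition_def by auto
    then have "disc_sets A m n (R' 0) (C' 0) (R' 0) (C' 0) \<in> ?S" using l0 by blast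
    then show ?thesis by blast
  qed
  have le1: "disc_part A m n l R' C' \<le> Max T"
    unfolding disc_part_def by (rule Max_mono[OF ST Sne finT])
  have le2: "disc_k A m n l \<le> disc_part A m n l R' C'"
    unfolding disc_k_def
  proof (rule cInf_lower)
    show "disc_part A m n l R' C' \<in> {disc_part A m n l R C |R C. proper_partition m l R \<and> proper_partition n l C}"
      using ppR' ppC' by blast
    show "bdd_below {disc_part A m n l R C |R C. proper_partition m l R \<and> proper_partition n l C}"
      by (rule bdd_belowI[of _ 0]) (use disc_part_nonneg[OF nonneg] l in auto)
  qed
  have eq1: "{disc_part A m n 1 P Q |P Q. proper_partition m 1 P \<and> proper_partition n 1 Q} = {Max T}"
  proof (intro equalityI subsetI)
    fix x assume "x \<in> {disc_part A m n 1 P Q |P Q. proper_partition m 1 P \<and> proper_partition n 1 Q}"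
    then obtain P Q where x: "x = disc_part A m n 1 P Q" and P: "proper_partition m 1 P"
      and Q: "proper_partition n 1 Q" by blast
    have P0: "P 0 = {..<m}" using P unfolding proper_partition_def by auto
    have Q0: "Q 0 = {..<n}" using Q unfolding proper_partition_def by auto
    have "{disc_sets A m n X Y (P a) (Q b) | a b X Y.
            a < 1 \<and> b < 1 \<and> X \<subseteq> P a \<and> X \<noteq> {} \<and> Y \<subseteq> Q b \<and> Y \<noteq> {}} = T"
      unfolding T_def using P0 Q0 by auto
    then show "x \<in> {Max T}" unfolding x disc_part_def by simp
  next
    fix x assume "x \<in> {Max T}"
    have P: "proper_partition m 1 (\<lambda>_. {..<m})" using m0 unfolding proper_partition_def by auto
    have Q: "proper_partition n 1 (\<lambda>_. {..<n})" using n0 unfolding proper_partition_def by auto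
    have "{disc_sets A m n X Y ((\<lambda>_. {..<m}) a) ((\<lambda>_. {..<n}) b) | a b X Y.
            (a::nat) < 1 \<and> (b::nat) < 1 \<and> True \<and> b < 1 \<and> X \<subseteq> (\<lambda>_. {..<m}) a \<and> X \<noteq> {} \<and> Y \<subseteq> (\<lambda>_. {..<n}) b \<and> Y \<noteq> {}} = T"
      unfolding T_def by auto
    then have "disc_part A m n 1 (\<lambda>_. {..<m}) (\<lambda>_. {..<n}) = Max T"
      unfolding disc_part_def by simp
    show "x \<in> {disc_part A m n 1 P Q |P Q. proper_partition m 1 P \<and> proper_partition n 1 Q}"
      unfolding mem_Collect_eq
      by (rule exI[of _ "\<lambda>_. {..<m}"], rule exI[of _ "\<lambda>_. {..<n}"])
        (use \<open>x \<in> {Max T}\<close> P Q \<open>disc_part A m n 1 (\<lambda>_. {..<m}) (\<lambda>_. {..<n}) = Max T\<close> in simp)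
  qed
  have "disc_k A m n 1 = Max T" unfolding disc_k_def eq1 by simp
  then show "disc_k A m n l \<le> disc_k A m n 1" using le1 le2 by simp
qed

end
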